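(* Let $d$ be a positive integer. For every point $z\in\mathbb{P}^d_\circ$ there exist a set $\mathcal{K}$ of $d$ points of $\mathbb{P}^d_\circ$, all of $1$-norm $\|z\|_1$, and a partition of $\mathcal{K}$ into $d/|C\cdot z|$ subsets, each of cardinality $|C\cdot z|$, such that every subset $\mathcal{L}$ of this partition satisfies $$\kappa(C\cdot z)=\sum_{x\in\mathcal{L}}|x_i|\quad\text{for every } i\in\{1,\dots,d\},$$ and, for each such $\mathcal{L}$, there exists a point of $\mathbb{P}^d_\circ$ whose orbit under $C$ contains $\mathcal{L}$.
   Context: A point of $\mathbb{Z}^d$ is primitive if its coordinates are relatively prime; $\mathbb{P}^d_\circ$ denotes the set of primitive points of $\mathbb{Z}^d$ whose first non-zero coordinate is positive. For a finite $\mathcal{X}\subset\mathbb{R}^d$, $\kappa(\mathcal{X})=\max_{1\le i\le d}\sum_{x\in\mathcal{X}}|x_i|$. Let $\sigma:\mathbb{R}^d\to\mathbb{R}^d$ be the cyclic coordinate shift $\sigma(x_1,\dots,x_d)=(x_d,x_1,\dots,x_{d-1})$, and let $\tau(x)=\sigma(x)$ if $x_d\ge 0$ and $\tau(x)=-\sigma(x)$ otherwise. $C$ is the cyclic group (of order $d$) generated by $\tau$, and $C\cdot z=\{g(z):g\in C\}$ is the orbit of $z$; it is a subset of $\mathbb{P}^d_\circ$ when $z\in\mathbb{P}^d_\circ$. *)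

theory Defs
  imports Main "HOL-Library.Disjoint_Sets"
begin

text \<open>Points of Z^d are represented as integer lists of length d;
  coordinate x_i (i = 1..d) is x ! (i - 1).\<close>

definition primitive_pts :: "nat \<Rightarrow> int list set" where
  "primitive_pts d = {x. length x = d \<and> Gcd (set x) = 1}"

definition prim_circ :: "nat \<Rightarrow> int list set" where
  "prim_circ d = {x \<in> primitive_pts d.
      \<exists>i<d. x ! i > 0 \<and> (\<forall>j<i. x ! j = 0)}"

definition norm1 :: "int list \<Rightarrow> int" where
  "norm1 x = sum_list (map abs x)"

definition kappa :: "nat \<Rightarrow> int list set \<Rightarrow> int" where
  "kappa d X = Max ((\<lambda>i. \<Sum>x\<in>X. \<bar>x ! i\<bar>) ` {..<d})"

definition sigma :: "int list \<Rightarrow> int list" where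
  "sigma x = last x # butlast x"

definition tau :: "int list \<Rightarrow> int list" where
  "tau x = (if last x \<ge> 0 then sigma x else map uminus (sigma x))"

text \<open>Orbit C.z of z under the cyclic group C generated by tau.\<close>
definition orbit :: "int list \<Rightarrow> int list set" where
  "orbit z = range (\<lambda>k. (tau ^^ k) z)"

end

theory Submission
  imports Defs
begin

definition ix :: "nat \<Rightarrow> int \<Rightarrow> nat" where "ix d t = nat (t mod int d)"

lemma ix_lt: "d > 0 \<Longrightarrow> ix d t < d"
  unfolding ix_def by (simp add: nat_less_iff)

lemma ix_nat: "i < d \<Longrightarrow> ix d (int i) = i"
  unfolding ix_def by simp

lemma ix_eq_iff: "d > 0 \<Longrightarrow> ix d t = ix d u \<longleftrightarrow> t mod int d = u mod int d"
  unfolding ix_def by (simp add: eq_nat_nat_iff)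

lemma int_ix: "d > 0 \<Longrightarrow> int (ix d t) = t mod int d"
  unfolding ix_def by simp

lemma ix_add: "d > 0 \<Longrightarrow> ix d (int (ix d t) + u) = ix d (t + u)"
  unfolding ix_def by (simp add: mod_add_left_eq)

lemma Gcd_abs_eq:
  fixes x y :: "int list"
  assumes "map abs x = map abs y"
  shows "Gcd (set x) = Gcd (set y)"
proof -
  have "Gcd (set x) = Gcd (abs ` set x)"
    using Gcd_image_normalize[of "set x"] by simp
  also have "abs ` set x = set (map abs x)" by simp
  also have "\<dots> = abs ` set y" using assms by simp
  also have "Gcd \<dots> = Gcd (set y)" using Gcd_image_normalize[of "set y"] by simp
  finally show ?thesis .
qed

lemma sigma_nth:
  assumes "length x = d" "d > 0" "i < d"
  shows "sigma x ! i = x ! ix d (int i - 1)"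
proof (cases i)
  case 0
  have "(-1::int) mod int d = int d - 1" using assms zmod_minus1[of "int d"] by simp
  then have "ix d (int i - 1) = d - 1" using 0 assms by (simp add: ix_def nat_diff_distrib)
  moreover have "x \<noteq> []" using assms by auto
  ultimately show ?thesis using assms 0
    by (simp add: sigma_def last_conv_nth)
next
  case (Suc j)
  then have "ix d (int i - 1) = j" using assms by (simp add: ix_def)
  then show ?thesis using assms Suc by (simp add: sigma_def nth_butlast)
qed

lemma length_sigma: "x \<noteq> [] \<Longrightarrow> length (sigma x) = length x"
  by (simp add: sigma_def)

lemma length_tau: "x \<noteq> [] \<Longrightarrow> length (tau x) = length x"
  by (simp add: tau_def sigma_def)

lemma tau_nth:
  assumes "length x = d" "d > 0"
  shows "\<exists>s::int. (s = 1 \<or> s = -1) \<and> (\<forall>i<d. tau x ! i = s * x ! ix d (int i - 1))"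
proof (cases "last x \<ge> 0")
  case True
  then show ?thesis using assms sigma_nth[OF assms] by (intro exI[of _ 1]) (simp add: tau_def)
next
  case False
  then show ?thesis using assms sigma_nth[OF assms]
    by (intro exI[of _ "-1"]) (auto simp: tau_def length_sigma)
qed

lemma tau_iter:
  assumes "length x = d" "d > 0"
  shows "length ((tau^^k) x) = d \<and> (\<exists>s::int. (s = 1 \<or> s = -1) \<and>
     (\<forall>i<d. (tau^^k) x ! i = s * x ! ix d (int i - int k)))"
proof (induction k)
  case 0
  then show ?case using assms by (intro conjI exI[of _ 1]) (auto simp: ix_nat)
next
  case (Suc k)
  then obtain s where s: "s = 1 \<or> s = -1" "\<forall>i<d. (tau^^k) x ! i = s * x ! ix d (int i - int k)"
    and l: "length ((tau^^k) x) = d" by blast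
  obtain s0 where s0: "s0 = 1 \<or> s0 = -1" "\<forall>i<d. tau ((tau^^k) x) ! i = s0 * (tau^^k) x ! ix d (int i - 1)"
    using tau_nth[OF l assms(2)] by blast
  have "l2": "length ((tau^^Suc k) x) = d" using l assms by (auto simp: length_tau)
  have "\<forall>i<d. (tau^^Suc k) x ! i = (s0 * s) * x ! ix d (int i - int (Suc k))"
  proof (intro allI impI)
    fix i assume i: "i < d"
    have "(tau^^Suc k) x ! i = s0 * (tau^^k) x ! ix d (int i - 1)" using s0 i by simp
    also have "\<dots> = s0 * (s * x ! ix d (int (ix d (int i - 1)) - int k))"
      using s ix_lt[OF assms(2)] by simp
    also have "ix d (int (ix d (int i - 1)) - int k) = ix d (int i - int (Suc k))"
      using ix_add[OF assms(2), of "int i - 1" "- int k"] by (simp add: algebra_simps)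
    finally show "(tau^^Suc k) x ! i = (s0 * s) * x ! ix d (int i - int (Suc k))" by simp
  qed
  moreover have "s0 * s = 1 \<or> s0 * s = -1" using s s0 by auto
  ultimately show ?case using l2 by blast
qed

lemma Gcd_uminus: "Gcd (set (map uminus (x::int list))) = Gcd (set x)"
  by (rule Gcd_abs_eq) (simp add: comp_def)

lemma set_sigma: "x \<noteq> [] \<Longrightarrow> set (sigma x) = set x"
proof -
  assume "x \<noteq> []"
  have "set (butlast x @ [last x]) = set (butlast x) \<union> {last x}" by simp
  then show ?thesis using append_butlast_last_id[OF \<open>x \<noteq> []\<close>] by (auto simp: sigma_def)
qed

lemma not_both_pos:
  assumes "\<exists>i<d. x ! i > (0::int) \<and> (\<forall>j<i. x ! j = 0)"
    and "\<exists>i<d. map uminus x ! i > 0 \<and> (\<forall>j<i. map uminus x ! j = 0)"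
    and "length x = d"
  shows False
proof -
  obtain i where i: "i < d" "x ! i > 0" "\<forall>j<i. x ! j = 0" using assms(1) by blast
  obtain k where k: "k < d" "map uminus x ! k > 0" "\<forall>j<k. map uminus x ! j = 0" using assms(2) by blast
  have "x ! k < 0" using k assms(3) by simp
  show False
  proof (cases i k rule: linorder_cases)
    case less then show ?thesis using k i assms(3) by force
  next
    case equal then show ?thesis using k i assms(3) \<open>x ! k < 0\<close> by simp
  next
    case greater then show ?thesis using i \<open>x ! k < 0\<close> by force
  qed
qed

lemma tau_pc:
  assumes "x \<in> prim_circ d" "d > 0"
  shows "tau x \<in> prim_circ d"
proof -
  have l: "length x = d" and g: "Gcd (set x) = 1"
    and p: "\<exists>i<d. x ! i > 0 \<and> (\<forall>j<i. x ! j = 0)"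
    using assms by (auto simp: prim_circ_def primitive_pts_def)
  have ne: "x \<noteq> []" using l assms by auto
  have lt: "length (tau x) = d" using length_tau[OF ne] l by simp
  have gt: "Gcd (set (tau x)) = 1"
    using g set_sigma[OF ne] Gcd_uminus[of "sigma x"] by (simp add: tau_def)
  have lastx: "last x = x ! (d - 1)" using ne l by (simp add: last_conv_nth)
  have pt: "\<exists>i<d. tau x ! i > 0 \<and> (\<forall>j<i. tau x ! j = 0)"
  proof (cases "last x" "0::int" rule: linorder_cases)
    case greater
    then show ?thesis using assms(2) by (intro exI[of _ 0]) (simp add: tau_def sigma_def)
  next
    case less
    then show ?thesis using assms(2) ne by (intro exI[of _ 0]) (simp add: tau_def sigma_def)
  next
    case equal
    obtain i where i: "i < d" "x ! i > 0" "\<forall>j<i. x ! j = 0" using p by blast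
    have "i \<noteq> d - 1" using equal lastx i by auto
    then have i1: "Suc i < d" using i by simp
    have "sigma x ! Suc i = x ! i" using i1 l by (simp add: sigma_def nth_butlast)
    moreover have "\<forall>j<Suc i. sigma x ! j = 0"
    proof (intro allI impI)
      fix j assume j: "j < Suc i"
      show "sigma x ! j = 0"
      proof (cases j)
        case 0 then show ?thesis using equal by (simp add: sigma_def)
      next
        case (Suc j') then show ?thesis using j i i1 l by (simp add: sigma_def nth_butlast)
      qed
    qed
    ultimately show ?thesis using i1 i equal by (intro exI[of _ "Suc i"]) (simp add: tau_def)
  qed
  show ?thesis using lt gt pt by (simp add: prim_circ_def primitive_pts_def)
qed

lemma tau_iter_pc: "x \<in> prim_circ d \<Longrightarrow> d > 0 \<Longrightarrow> (tau^^k) x \<in> prim_circ d"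
  by (induction k) (auto intro: tau_pc)

lemma norm1_tau: "x \<noteq> [] \<Longrightarrow> norm1 (tau x) = norm1 x"
proof -
  assume ne: "x \<noteq> []"
  have "norm1 (sigma x) = norm1 x"
  proof -
    have "norm1 (butlast x @ [last x]) = norm1 (butlast x) + \<bar>last x\<bar>" unfolding norm1_def
      by simp
    then have "norm1 x = norm1 (butlast x) + \<bar>last x\<bar>" using append_butlast_last_id[OF ne] by metis
    then show ?thesis by (simp add: norm1_def sigma_def)
  qed
  moreover have "norm1 (map uminus y) = norm1 y" for y by (simp add: norm1_def comp_def)
  ultimately show ?thesis by (simp add: tau_def)
qed

lemma norm1_tau_iter: "length x = d \<Longrightarrow> d > 0 \<Longrightarrow> norm1 ((tau^^k) x) = norm1 x"
proof (induction k)
  case 0 then show ?case by simp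
next
  case (Suc k)
  have "(tau^^k) x \<noteq> []" using tau_iter[OF Suc.prems, of k] Suc.prems by auto
  then show ?case using Suc norm1_tau by simp
qed

lemma tau_d:
  assumes "x \<in> prim_circ d" "d > 0"
  shows "(tau^^d) x = x"
proof -
  have l: "length x = d" using assms by (simp add: prim_circ_def primitive_pts_def)
  obtain s :: int where s: "s = 1 \<or> s = -1" "\<forall>i<d. (tau^^d) x ! i = s * x ! ix d (int i - int d)"
    and l2: "length ((tau^^d) x) = d" using tau_iter[OF l assms(2), of d] by blast
  have e: "\<forall>i<d. (tau^^d) x ! i = s * x ! i"
    using s(2) ix_nat unfolding ix_def by auto
  show ?thesis
  proof (cases "s = 1")
    case True then show ?thesis using e l l2 by (simp add: nth_equalityI)
  next
    case False
    then have "(tau^^d) x = map uminus x" using e s l l2 by (simp add: nth_equalityI)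
    moreover have "(tau^^d) x \<in> prim_circ d" by (rule tau_iter_pc[OF assms])
    ultimately show ?thesis using assms(1) not_both_pos[of d x] l
      by (auto simp: prim_circ_def)
  qed
qed

lemma orbit_struct:
  assumes z: "z \<in> prim_circ d" and d: "d > 0"
  shows "\<exists>p. 0 < p \<and> p dvd d \<and> (tau^^p) z = z \<and> orbit z = (\<lambda>k. (tau^^k) z) ` {..<p}
     \<and> inj_on (\<lambda>k. (tau^^k) z) {..<p}"
proof -
  define p where "p = (LEAST p. 0 < p \<and> (tau^^p) z = z)"
  have ex: "0 < d \<and> (tau^^d) z = z" using tau_d[OF z d] d by simp
  have pp: "0 < p \<and> (tau^^p) z = z" unfolding p_def by (rule LeastI[of _ d], rule ex)
  have minp: "\<And>q. 0 < q \<Longrightarrow> q < p \<Longrightarrow> (tau^^q) z \<noteq> z"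
    unfolding p_def using not_less_Least by blast
  have modeq: "(tau^^k) z = (tau^^(k mod p)) z" for k
    using funpow_mod_eq[of p tau z k] pp by simp
  have dvd: "p dvd d"
  proof (rule ccontr)
    assume "\<not> p dvd d"
    then have "0 < d mod p" by (simp add: dvd_eq_mod_eq_0)
    moreover have "d mod p < p" using pp by simp
    moreover have "(tau^^(d mod p)) z = z" using modeq[of d] ex by simp
    ultimately have "(tau^^(d mod p)) z \<noteq> z" using minp by simp
    then show False using \<open>(tau^^(d mod p)) z = z\<close> by simp
  qed
  have inj: "inj_on (\<lambda>k. (tau^^k) z) {..<p}"
  proof (rule inj_onI, rule ccontr)
    fix i j assume i: "i \<in> {..<p}" and j: "j \<in> {..<p}" and e: "(tau^^i) z = (tau^^j) z" and ne: "i \<noteq> j"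
    have key: "\<And>i j. i < j \<Longrightarrow> j < p \<Longrightarrow> (tau^^i) z = (tau^^j) z \<Longrightarrow> False"
    proof -
      fix i j assume ij: "i < j" "j < p" and e: "(tau^^i) z = (tau^^j) z"
      have "(tau^^(p - j + i)) z = (tau^^(p-j)) ((tau^^i) z)" by (simp add: funpow_add)
      also have "\<dots> = (tau^^(p-j)) ((tau^^j) z)" using e by simp
      also have "\<dots> = (tau^^(p - j + j)) z" by (simp add: funpow_add)
      also have "\<dots> = z" using ij pp by simp
      finally have eq: "(tau^^(p - j + i)) z = z" .
      have "0 < p - j + i" "p - j + i < p" using ij by auto
      then have "(tau^^(p - j + i)) z \<noteq> z" by (rule minp)
      then show False using eq by simp
    qed
    show False using key[of i j] key[of j i] i j e ne by (cases "i < j") auto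
  qed
  have orb: "orbit z = (\<lambda>k. (tau^^k) z) ` {..<p}"
  proof
    show "orbit z \<subseteq> (\<lambda>k. (tau^^k) z) ` {..<p}"
    proof
      fix x assume "x \<in> orbit z"
      then obtain k where k: "x = (tau^^k) z" unfolding orbit_def by blast
      have "k mod p < p" using pp by simp
      then show "x \<in> (\<lambda>k. (tau^^k) z) ` {..<p}" using k modeq[of k] by blast
    qed
  next
    show "(\<lambda>k. (tau^^k) z) ` {..<p} \<subseteq> orbit z" unfolding orbit_def by auto
  qed
  show ?thesis using pp dvd orb inj by blast
qed

lemma abs_period:
  assumes l: "length z = d" and d: "d > 0" and per: "(tau^^p) z = z"
  shows "\<bar>z ! ix d (t - int p)\<bar> = \<bar>z ! ix d t\<bar>"
proof -
  obtain s :: int where s: "s = 1 \<or> s = -1" "\<forall>i<d. (tau^^p) z ! i = s * z ! ix d (int i - int p)"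
    using tau_iter[OF l d, of p] by blast
  have "\<bar>z ! ix d t\<bar> = \<bar>s * z ! ix d (int (ix d t) - int p)\<bar>"
  proof -
    have "(tau^^p) z ! ix d t = s * z ! ix d (int (ix d t) - int p)" using s(2) ix_lt[OF d, of t] by blast
    then show ?thesis using per by simp
  qed
  also have "ix d (int (ix d t) - int p) = ix d (t - int p)"
    using ix_add[OF d, of t "- int p"] by simp
  finally show ?thesis using s(1) by (auto simp: abs_mult)
qed

lemma abs_period_mult:
  assumes l: "length z = d" and d: "d > 0" and per: "(tau^^p) z = z"
  shows "\<bar>z ! ix d (t - int (j * p))\<bar> = \<bar>z ! ix d t\<bar>"
proof (induction j)
  case 0 then show ?case by simp
next
  case (Suc j)
  have eq: "t - int (Suc j * p) = (t - int (j * p)) - int p" by simp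
  show ?case by (subst eq) (rule trans[OF abs_period[OF l d per] Suc.IH])
qed

lemma sliding:
  fixes Z :: "int \<Rightarrow> int"
  assumes per: "\<And>t. Z (t - int p) = Z t" and p: "p > 0"
  shows "(\<Sum>k<p. Z (int i - int k)) = (\<Sum>k<p. Z (- int k))"
proof (induction i)
  case 0 then show ?case by simp
next
  case (Suc i)
  obtain n where n: "p = Suc n" using p by (cases p) auto
  have "(\<Sum>k<p. Z (int (Suc i) - int k)) = Z (int (Suc i)) + (\<Sum>k<n. Z (int i - int k))"
    unfolding n sum.lessThan_Suc_shift by simp
  also have "Z (int (Suc i)) = Z (int i - int n)"
    using per[of "int (Suc i)"] n by simp
  also have "\<dots> + (\<Sum>k<n. Z (int i - int k)) = (\<Sum>k<p. Z (int i - int k))"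
    unfolding n by simp
  finally show ?case using Suc by simp
qed

lemma sum_abs_S:
  assumes d: "d > 0" and l: "length x = d" and ab: "map abs x = map abs z" and i: "i < d"
  shows "(\<Sum>k<p. \<bar>(tau^^k) x ! i\<bar>) = (\<Sum>k<p. \<bar>z ! ix d (int i - int k)\<bar>)"
proof (rule sum.cong[OF refl])
  fix k
  obtain s :: int where s: "s = 1 \<or> s = -1" "\<forall>i<d. (tau^^k) x ! i = s * x ! ix d (int i - int k)"
    using tau_iter[OF l d, of k] by blast
  have lz: "length z = d" using l ab by (metis length_map)
  have ixl: "ix d (int i - int k) < d" using ix_lt[OF d] .
  have "\<bar>x ! ix d (int i - int k)\<bar> = map abs x ! ix d (int i - int k)" using ixl l by simp
  also have "\<dots> = \<bar>z ! ix d (int i - int k)\<bar>" using ab ixl lz by simp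
  finally show "\<bar>(tau^^k) x ! i\<bar> = \<bar>z ! ix d (int i - int k)\<bar>"
    using s i by (auto simp: abs_mult)
qed

lemma assemble:
  assumes d: "d > 0" and z: "z \<in> prim_circ d" and p: "p > 0" and pq: "q * p = d"
    and per: "(tau^^p) z = z"
    and orb: "orbit z = (\<lambda>k. (tau^^k) z) ` {..<p}" and injz: "inj_on (\<lambda>k. (tau^^k) z) {..<p}"
    and wpc: "\<And>j. j < q \<Longrightarrow> w j \<in> prim_circ d"
    and wabs: "\<And>j. j < q \<Longrightarrow> map abs (w j) = map abs z"
    and winj: "\<And>j. j < q \<Longrightarrow> inj_on (\<lambda>k. (tau^^k) (w j)) {..<p}"
    and wdisj: "\<And>j j'. j < q \<Longrightarrow> j' < q \<Longrightarrow> j \<noteq> j' \<Longrightarrow>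
        (\<lambda>k. (tau^^k) (w j)) ` {..<p} \<inter> (\<lambda>k. (tau^^k) (w j')) ` {..<p} = {}"
  shows "\<exists>K P. K \<subseteq> prim_circ d \<and> card K = d \<and> (\<forall>x\<in>K. norm1 x = norm1 z)
     \<and> partition_on K P \<and> card P = d div card (orbit z)
     \<and> (\<forall>L\<in>P. card L = card (orbit z)
          \<and> (\<forall>i<d. kappa d (orbit z) = (\<Sum>x\<in>L. \<bar>x ! i\<bar>))
          \<and> (\<exists>w\<in>prim_circ d. L \<subseteq> orbit w))"
proof -
  define Lf where "Lf j = (\<lambda>k. (tau^^k) (w j)) ` {..<p}" for j
  define S where "S i = (\<Sum>k<p. \<bar>z ! ix d (int i - int k)\<bar>)" for i
  have lz: "length z = d" using z by (simp add: prim_circ_def primitive_pts_def)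
  have lw: "length (w j) = d" if "j < q" for j using wpc[OF that] by (simp add: prim_circ_def primitive_pts_def)
  have Sc: "S i = S 0" for i
  proof -
    have "(\<Sum>k<p. (\<lambda>t. \<bar>z ! ix d t\<bar>) (int i - int k)) = (\<Sum>k<p. (\<lambda>t. \<bar>z ! ix d t\<bar>) (- int k))"
      by (rule sliding[OF _ p]) (rule abs_period[OF lz d per])
    then show ?thesis unfolding S_def by simp
  qed
  have cardorb: "card (orbit z) = p" using orb injz by (simp add: card_image)
  have sumorb: "(\<Sum>x\<in>orbit z. \<bar>x ! i\<bar>) = S 0" if "i < d" for i
  proof -
    have "(\<Sum>x\<in>orbit z. \<bar>x ! i\<bar>) = (\<Sum>k<p. \<bar>(tau^^k) z ! i\<bar>)"
      unfolding orb by (subst sum.reindex[OF injz]) simp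
    also have "\<dots> = S i" unfolding S_def by (rule sum_abs_S[OF d lz refl that])
    finally show ?thesis using Sc by simp
  qed
  have kap: "kappa d (orbit z) = S 0"
  proof -
    have "(\<lambda>i. \<Sum>x\<in>orbit z. \<bar>x ! i\<bar>) ` {..<d} = {S 0}"
      using sumorb d by auto
    then show ?thesis unfolding kappa_def by simp
  qed
  have sumL: "(\<Sum>x\<in>Lf j. \<bar>x ! i\<bar>) = S 0" if "j < q" "i < d" for i j
  proof -
    have "(\<Sum>x\<in>Lf j. \<bar>x ! i\<bar>) = (\<Sum>k<p. \<bar>(tau^^k) (w j) ! i\<bar>)"
      unfolding Lf_def by (subst sum.reindex[OF winj[OF that(1)]]) simp
    also have "\<dots> = S i" unfolding S_def by (rule sum_abs_S[OF d lw[OF that(1)] wabs[OF that(1)] that(2)])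
    finally show ?thesis using Sc by simp
  qed
  have cardL: "card (Lf j) = p" if "j < q" for j
    unfolding Lf_def using winj[OF that] by (simp add: card_image)
  have neL: "Lf j \<noteq> {}" for j unfolding Lf_def using p by auto
  have disjL: "Lf j \<inter> Lf j' = {}" if "j < q" "j' < q" "j \<noteq> j'" for j j'
    unfolding Lf_def by (rule wdisj[OF that])
  have injL: "inj_on Lf {..<q}"
  proof (rule inj_onI, rule ccontr)
    fix j j' assume "j \<in> {..<q}" "j' \<in> {..<q}" "Lf j = Lf j'" "j \<noteq> j'"
    then show False using disjL[of j j'] neL[of j] by auto
  qed
  define K where "K = \<Union> (Lf ` {..<q})"
  define P where "P = Lf ` {..<q}"
  have "K \<subseteq> prim_circ d"
    unfolding K_def Lf_def using tau_iter_pc[OF wpc d] by auto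
  moreover have "card K = d"
  proof -
    have "card K = (\<Sum>j<q. card (Lf j))" unfolding K_def
      using disjL by (intro card_UN_disjoint) (auto simp: Lf_def[of j for j])
    also have "\<dots> = q * p" using cardL by simp
    finally show ?thesis using pq by simp
  qed
  moreover have "\<forall>x\<in>K. norm1 x = norm1 z"
  proof
    fix x assume "x \<in> K"
    then obtain j k where jk: "j < q" "x = (tau^^k) (w j)" unfolding K_def Lf_def by auto
    have "norm1 x = norm1 (w j)" using jk norm1_tau_iter[OF lw[OF jk(1)] d] by simp
    also have "\<dots> = norm1 z" unfolding norm1_def using wabs[OF jk(1)] by simp
    finally show "norm1 x = norm1 z" .
  qed
  moreover have "partition_on K P"
  proof (rule partition_onI)
    show "\<Union> P = K" unfolding P_def K_def ..
    show "disjnt A B" if "A \<in> P" "B \<in> P" "A \<noteq> B" for A B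
      using that disjL unfolding P_def disjnt_def by auto
    show "{} \<notin> P" unfolding P_def using neL by auto
  qed
  moreover have "card P = d div card (orbit z)"
  proof -
    have "card P = q" unfolding P_def using injL by (simp add: card_image)
    then show ?thesis using cardorb p by (simp flip: pq)
  qed
  moreover have "\<forall>L\<in>P. card L = card (orbit z)
          \<and> (\<forall>i<d. kappa d (orbit z) = (\<Sum>x\<in>L. \<bar>x ! i\<bar>))
          \<and> (\<exists>w\<in>prim_circ d. L \<subseteq> orbit w)"
  proof
    fix L assume "L \<in> P"
    then obtain j where j: "j < q" "L = Lf j" unfolding P_def by auto
    have "L \<subseteq> orbit (w j)" unfolding j Lf_def orbit_def by auto
    then show "card L = card (orbit z)
          \<and> (\<forall>i<d. kappa d (orbit z) = (\<Sum>x\<in>L. \<bar>x ! i\<bar>))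
          \<and> (\<exists>w\<in>prim_circ d. L \<subseteq> orbit w)"
      using j cardL cardorb kap sumL wpc by auto
  qed
  ultimately show ?thesis by blast
qed

lemma shift_rel2:
  assumes d: "d > 0" and lx: "length X = d" and ly: "length Y = d"
    and e: "(tau^^i) X = (tau^^j) Y"
  shows "\<exists>s::int. (s = 1 \<or> s = -1) \<and> (\<forall>u. X ! ix d (u + (int j - int i)) = s * Y ! ix d u)"
proof -
  obtain si :: int where si: "si = 1 \<or> si = -1" "\<forall>t<d. (tau^^i) X ! t = si * X ! ix d (int t - int i)"
    using tau_iter[OF lx d, of i] by blast
  obtain sj :: int where sj: "sj = 1 \<or> sj = -1" "\<forall>t<d. (tau^^j) Y ! t = sj * Y ! ix d (int t - int j)"
    using tau_iter[OF ly d, of j] by blast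
  have "X ! ix d (u + (int j - int i)) = (si * sj) * Y ! ix d u" for u
  proof -
    define t where "t = ix d (u + int j)"
    have t: "t < d" unfolding t_def by (rule ix_lt[OF d])
    have 1: "ix d (int t - int i) = ix d (u + (int j - int i))"
      unfolding t_def using ix_add[OF d, of "u + int j" "- int i"] by (simp add: algebra_simps)
    have 2: "ix d (int t - int j) = ix d u"
      unfolding t_def using ix_add[OF d, of "u + int j" "- int j"] by (simp add: algebra_simps)
    have "si * X ! ix d (u + (int j - int i)) = sj * Y ! ix d u"
      using si(2) sj(2) t e 1 2 by metis
    then have "si * (si * X ! ix d (u + (int j - int i))) = si * (sj * Y ! ix d u)" by simp
    then show ?thesis using si(1) by (auto simp: algebra_simps)
  qed
  moreover have "si * sj = 1 \<or> si * sj = -1" using si(1) sj(1) by auto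
  ultimately show ?thesis by blast
qed

lemma ix_shift_zero:
  assumes d: "d > 0" and e: "ix d (t + k) = ix d t"
  shows "k mod int d = 0"
proof -
  have "(t + k) mod int d = t mod int d" using e ix_eq_iff[OF d] by blast
  then have "((t + k) mod int d - t mod int d) mod int d = 0" by simp
  then have "((t + k) - t) mod int d = 0" by (simp add: mod_diff_eq)
  then show ?thesis by simp
qed

lemma mod_zero_small:
  assumes "k mod int d = 0" "\<bar>k\<bar> < int d" 
  shows "k = 0"
proof (rule ccontr)
  assume "k \<noteq> 0"
  moreover have "int d dvd k" using assms(1) by (simp add: mod_eq_0_iff_dvd)
  ultimately have "\<bar>int d\<bar> \<le> \<bar>k\<bar>" by (rule dvd_imp_le_int)
  then show False using assms(2) by simp
qed

lemma abs_iter: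
  assumes d: "d > 0" and l: "length x = d" and ab: "map abs x = map abs z" and i: "i < d"
  shows "\<bar>(tau^^k) x ! i\<bar> = \<bar>z ! ix d (int i - int k)\<bar>"
proof -
  obtain s :: int where s: "s = 1 \<or> s = -1" "\<forall>i<d. (tau^^k) x ! i = s * x ! ix d (int i - int k)"
    using tau_iter[OF l d, of k] by blast
  have lz: "length z = d" using l ab by (metis length_map)
  have ixl: "ix d (int i - int k) < d" using ix_lt[OF d] .
  have "\<bar>x ! ix d (int i - int k)\<bar> = map abs x ! ix d (int i - int k)" using ixl l by simp
  also have "\<dots> = \<bar>z ! ix d (int i - int k)\<bar>" using ab ixl lz by simp
  finally show ?thesis using s i by (auto simp: abs_mult)
qed

abbreviation concl where "concl d z \<equiv> \<exists>K P. K \<subseteq> prim_circ d \<and> card K = d \<and> (\<forall>x\<in>K. norm1 x = norm1 z)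
     \<and> partition_on K P \<and> card P = d div card (orbit z)
     \<and> (\<forall>L\<in>P. card L = card (orbit z)
          \<and> (\<forall>i<d. kappa d (orbit z) = (\<Sum>x\<in>L. \<bar>x ! i\<bar>))
          \<and> (\<exists>w\<in>prim_circ d. L \<subseteq> orbit w))"

lemma case_big:
  assumes d: "d > 0" and z: "z \<in> prim_circ d" and p: "p > 0" "p dvd d" "p < d"
    and per: "(tau^^p) z = z"
    and orb: "orbit z = (\<lambda>k. (tau^^k) z) ` {..<p}" and injz: "inj_on (\<lambda>k. (tau^^k) z) {..<p}"
    and a: "a < d" "z ! a > 0" "\<forall>j<a. z ! j = 0"
    and b: "b < d" "z ! b \<noteq> 0" "b \<noteq> a"
    and c: "c < d" "z ! c \<noteq> 0" "c \<noteq> a" "c \<noteq> b"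
  shows "concl d z"
proof -
  have lz: "length z = d" using z by (simp add: prim_circ_def primitive_pts_def)
  have gz: "Gcd (set z) = 1" using z by (simp add: prim_circ_def primitive_pts_def)
  have ab: "a < b" using a b by (metis linorder_neqE_nat)
  define w0 where "w0 = (map abs z)[b := - \<bar>z ! b\<bar>]"
  have lw0: "length w0 = d" unfolding w0_def using lz by simp
  have w0n: "w0 ! t = (if t = b then - \<bar>z ! b\<bar> else \<bar>z ! t\<bar>)" if "t < d" for t
    unfolding w0_def using that lz b by simp
  have w0abs: "map abs w0 = map abs z"
    by (rule nth_equalityI) (auto simp: lw0 lz w0n)
  have w0pc: "w0 \<in> prim_circ d"
  proof -
    have "Gcd (set w0) = 1" using Gcd_abs_eq[OF w0abs] gz by simp
    moreover have "w0 ! a > 0" using w0n a b by auto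
    moreover have "\<forall>j<a. w0 ! j = 0" using w0n a ab by auto
    ultimately show ?thesis using lw0 a by (auto simp: prim_circ_def primitive_pts_def)
  qed
  have negb: "t = b" if "t < d" "w0 ! t < 0" for t using that w0n by (cases "t = b") auto
  have w0b: "w0 ! b < 0" using w0n b by simp
  have w0a: "w0 ! a > 0" using w0n a b by auto
  have w0c: "w0 ! c > 0" using w0n c by auto
  have injw0: "inj_on (\<lambda>k. (tau^^k) w0) {..<d}"
  proof (rule inj_onI, rule ccontr)
    fix i j assume i: "i \<in> {..<d}" and j: "j \<in> {..<d}" and e: "(tau^^i) w0 = (tau^^j) w0" and ne: "i \<noteq> j"
    define k where "k = int j - int i"
    obtain s :: int where s: "s = 1 \<or> s = -1" "\<forall>u. w0 ! ix d (u + k) = s * w0 ! ix d u"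
      using shift_rel2[OF d lw0 lw0 e] unfolding k_def by blast
    have kmod: "k mod int d \<noteq> 0"
    proof
      assume "k mod int d = 0"
      moreover have "\<bar>k\<bar> < int d" using i j unfolding k_def by auto
      ultimately have "k = 0" by (rule mod_zero_small)
      then show False using ne unfolding k_def by simp
    qed
    show False
    proof (cases "s = 1")
      case True
      have "w0 ! ix d (int b + k) = w0 ! b" using s(2) True ix_nat[OF b(1)] by simp
      then have "ix d (int b + k) = b" using negb[OF ix_lt[OF d]] w0b by simp
      then have "k mod int d = 0" using ix_shift_zero[OF d, of "int b" k] ix_nat[OF b(1)] by simp
      then show False using kmod by simp
    next
      case False
      then have s1: "s = -1" using s(1) by simp
      have neg: "ix d (int x - k) = b" if "x < d" "w0 ! x > 0" for x
      proof -
        have "w0 ! ix d ((int x - k) + k) = s * w0 ! ix d (int x - k)" using s(2) by blast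
        then have "w0 ! ix d ((int x - k) + k) = - w0 ! ix d (int x - k)" using s1 by simp
        then have "w0 ! x = - w0 ! ix d (int x - k)" using ix_nat[OF that(1)] by simp
        then show ?thesis using negb[OF ix_lt[OF d]] that(2) by simp
      qed
      have "ix d (int a - k) = ix d (int c - k)" using neg[OF a(1) w0a] neg[OF c(1) w0c] by simp
      then have "ix d (int a - k + (int c - int a)) = ix d (int a - k)"
        by (simp add: algebra_simps)
      then have "(int c - int a) mod int d = 0" by (rule ix_shift_zero[OF d])
      moreover have "\<bar>int c - int a\<bar> < int d" using a c by auto
      ultimately have "int c - int a = 0" by (rule mod_zero_small)
      then show False using c by simp
    qed
  qed
  define q where "q = d div p"
  have pq: "q * p = d" unfolding q_def using p by simp
  define w where "w j = (tau^^(j * p)) w0" for j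
  have wit: "(tau^^k) (w j) = (tau^^(k + j * p)) w0" for k j
    unfolding w_def by (simp add: funpow_add)
  have bound: "k + j * p < d" if "k < p" "j < q" for k j
  proof -
    have "k + j * p < p + j * p" using that by simp
    also have "\<dots> = Suc j * p" by simp
    also have "\<dots> \<le> q * p" using that(2) by (intro mult_le_mono1) simp
    finally show ?thesis using pq by simp
  qed
  have uniq: "j = j'" if "k + j * p = k' + j' * p" "k < p" "k' < p" for k k' j j'
  proof -
    have "(k + j * p) div p = j" using that(2) by simp
    moreover have "(k' + j' * p) div p = j'" using that(3) by simp
    ultimately show ?thesis using that(1) by simp
  qed
  show ?thesis
  proof (rule assemble[OF d z p(1) pq per orb injz])
    fix j assume j: "j < q"
    show "w j \<in> prim_circ d" unfolding w_def by (rule tau_iter_pc[OF w0pc d])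
    show "map abs (w j) = map abs z"
    proof (rule nth_equalityI)
      show "length (map abs (w j)) = length (map abs z)"
        using tau_iter[OF lw0 d, of "j * p"] lz unfolding w_def by simp
      fix t assume "t < length (map abs (w j))"
      then have t: "t < d" using tau_iter[OF lw0 d, of "j * p"] unfolding w_def by simp
      have "\<bar>w j ! t\<bar> = \<bar>z ! ix d (int t - int (j * p))\<bar>"
        unfolding w_def by (rule abs_iter[OF d lw0 w0abs t])
      also have "\<dots> = \<bar>z ! ix d (int t)\<bar>" by (rule abs_period_mult[OF lz d per])
      also have "\<dots> = \<bar>z ! t\<bar>" using ix_nat[OF t] by simp
      finally show "map abs (w j) ! t = map abs z ! t"
        using t lz tau_iter[OF lw0 d, of "j * p"] unfolding w_def by simp
    qed
    show "inj_on (\<lambda>k. (tau^^k) (w j)) {..<p}"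
    proof (rule inj_onI)
      fix k k' assume "k \<in> {..<p}" "k' \<in> {..<p}" "(tau^^k) (w j) = (tau^^k') (w j)"
      then show "k = k'" using wit injw0 bound[of k j] bound[of k' j] j
        by (auto dest: inj_onD)
    qed
  next
    fix j j' assume j: "j < q" "j' < q" "j \<noteq> j'"
    show "(\<lambda>k. (tau^^k) (w j)) ` {..<p} \<inter> (\<lambda>k. (tau^^k) (w j')) ` {..<p} = {}"
    proof (rule ccontr)
      assume "\<not> ?thesis"
      then obtain k k' where kk: "k < p" "k' < p" "(tau^^k) (w j) = (tau^^k') (w j')" by auto
      then have "(tau^^(k + j * p)) w0 = (tau^^(k' + j' * p)) w0" using wit by simp
      then have "k + j * p = k' + j' * p"
        using injw0 bound[OF kk(1) j(1)] bound[OF kk(2) j(2)] by (auto dest: inj_onD)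
      then show False using uniq kk j by blast
    qed
  qed
qed

lemma case_two:
  assumes d: "d > 0" and z: "z \<in> prim_circ d" and p: "p > 0" "p dvd d" "p < d"
    and per: "(tau^^p) z = z"
    and orb: "orbit z = (\<lambda>k. (tau^^k) z) ` {..<p}" and injz: "inj_on (\<lambda>k. (tau^^k) z) {..<p}"
    and a: "a < d" "z ! a > 0" "\<forall>j<a. z ! j = 0"
    and bdef: "b = ix d (int a + int p)"
    and b: "b < d" "z ! b \<noteq> 0" "b \<noteq> a"
    and only: "\<forall>t<d. z ! t \<noteq> 0 \<longrightarrow> t = a \<or> t = b"
  shows "concl d z"
proof -
  have lz: "length z = d" using z by (simp add: prim_circ_def primitive_pts_def)
  have gz: "Gcd (set z) = 1" using z by (simp add: prim_circ_def primitive_pts_def)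
  have ab: "a < b" using a b by (metis linorder_neqE_nat)
  have pnd: "int p mod int d \<noteq> 0"
  proof
    assume "int p mod int d = 0"
    moreover have "\<bar>int p\<bar> < int d" using p by simp
    ultimately have "int p = 0" by (rule mod_zero_small)
    then show False using p by simp
  qed
  have absb: "\<bar>z ! b\<bar> = \<bar>z ! a\<bar>"
  proof -
    have "\<bar>z ! ix d (int a + int p - int p)\<bar> = \<bar>z ! ix d (int a + int p)\<bar>"
      by (rule abs_period[OF lz d per])
    then show ?thesis using bdef ix_nat[OF a(1)] by simp
  qed
  have za1: "z ! a = 1"
  proof -
    have "z ! a dvd Gcd (set z)"
    proof (rule Gcd_greatest)
      fix y assume "y \<in> set z"
      then obtain t where t: "t < d" "y = z ! t" using lz by (auto simp: in_set_conv_nth)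
      show "z ! a dvd y"
      proof (cases "z ! t = 0")
        case True then show ?thesis using t by simp
      next
        case False
        then have "t = a \<or> t = b" using only t by blast
        then show ?thesis using t absb by (auto simp: abs_eq_iff)  
      qed
    qed
    then have "z ! a dvd 1" using gz by simp
    then show ?thesis using a(2) by (simp add: zdvd_imp_le antisym)
  qed
  have bpa: "ix d (int b + int p) = a"
  proof -
    have "\<bar>z ! ix d (int b + int p - int p)\<bar> = \<bar>z ! ix d (int b + int p)\<bar>"
      by (rule abs_period[OF lz d per])
    then have "z ! ix d (int b + int p) \<noteq> 0" using ix_nat[OF b(1)] b by simp
    then have "ix d (int b + int p) = a \<or> ix d (int b + int p) = b" using only ix_lt[OF d] by blast
    moreover have "ix d (int b + int p) \<noteq> b"
    proof
      assume "ix d (int b + int p) = b"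
      then have "ix d (int b + int p) = ix d (int b)" using ix_nat[OF b(1)] by simp
      then show False using ix_shift_zero[OF d] pnd by blast
    qed
    ultimately show ?thesis by blast
  qed
  have d2: "d = 2 * p"
  proof -
    have "ix d (int a + (int p + int p)) = ix d (int a)"
      using bpa ix_add[OF d, of "int a + int p" "int p"] bdef ix_nat[OF a(1)]
      by (simp add: algebra_simps)
    then have "(int p + int p) mod int d = 0" by (rule ix_shift_zero[OF d])
    then have "int d dvd (int p + int p)" by (simp only: mod_eq_0_iff_dvd)
    moreover have "int p + int p = int (2 * p)" by simp
    ultimately have "int d dvd int (2 * p)" by metis
    then have "d dvd 2 * p" by (simp only: int_dvd_int_iff)
    then obtain c where c: "2 * p = d * c" by blast
    have "c \<noteq> 0"
    proof
      assume "c = 0" then show False using c p by simp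
    qed
    have lt: "d * c < d * 2" using c p(3) by linarith
    then have "c < 2" by simp
    with \<open>c \<noteq> 0\<close> have "c = 1" by simp
    then show ?thesis using c by simp
  qed
  have bmod: "int b mod int d = (int a + int p) mod int d"
    using bdef int_ix[OF d] by simp
  define w where "w j = z[b := (if j = (0::nat) then 1 else -1)]" for j
  have lw: "length (w j) = d" for j unfolding w_def using lz by simp
  have wn: "w j ! t = (if t = b then (if j = 0 then 1 else -1) else z ! t)" if "t < d" for j t
    unfolding w_def using that lz by simp
  have wa: "w j ! a = 1" for j using wn a b za1 by simp
  have wb0: "w 0 ! b = 1" using wn b by simp
  have wb1: "w 1 ! b = -1" using wn b by simp
  have wonly: "t = a \<or> t = b" if "t < d" "w j ! t \<noteq> 0" for j t
    using that wn only by (cases "t = b") auto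
  have wabs: "map abs (w j) = map abs z" for j
  proof (rule nth_equalityI)
    show "length (map abs (w j)) = length (map abs z)" using lw lz by simp
    fix t assume "t < length (map abs (w j))"
    then have t: "t < d" using lw by simp
    show "map abs (w j) ! t = map abs z ! t"
      using wn[OF t] t lw lz absb za1 by auto
  qed
  have wpc: "w j \<in> prim_circ d" for j
  proof -
    have "Gcd (set (w j)) = 1" using Gcd_abs_eq[OF wabs] gz by simp
    moreover have "\<forall>i<a. w j ! i = 0" using wn a ab by auto
    ultimately show ?thesis using lw a wa by (auto simp: prim_circ_def primitive_pts_def)
  qed
  have winj: "inj_on (\<lambda>k. (tau^^k) (w j)) {..<p}" for j
  proof (rule inj_onI, rule ccontr)
    fix i i' assume i: "i \<in> {..<p}" and i': "i' \<in> {..<p}" and e: "(tau^^i) (w j) = (tau^^i') (w j)"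
      and ne: "i \<noteq> i'"
    define k where "k = int i' - int i"
    obtain s :: int where s: "s = 1 \<or> s = -1" "\<forall>u. w j ! ix d (u + k) = s * w j ! ix d u"
      using shift_rel2[OF d lw lw e] unfolding k_def by blast
    have kb: "0 < \<bar>k\<bar>" "\<bar>k\<bar> < int p" using i i' ne unfolding k_def by auto
    have "w j ! ix d (int a + k) = s * w j ! ix d (int a)" using s(2) by blast
    then have "w j ! ix d (int a + k) \<noteq> 0" using s(1) wa ix_nat[OF a(1)] by auto
    then have "ix d (int a + k) = a \<or> ix d (int a + k) = b" using wonly ix_lt[OF d] by blast
    then show False
    proof
      assume "ix d (int a + k) = a"
      then have "k mod int d = 0" using ix_shift_zero[OF d, of "int a" k] ix_nat[OF a(1)] by simp
      then have "k = 0" by (rule mod_zero_small) (use kb p in simp)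
      then show False using kb by simp
    next
      assume "ix d (int a + k) = b"
      then have "ix d (int a + k) = ix d (int a + int p)" using bdef by simp
      then have "ix d (int a + int p + (k - int p)) = ix d (int a + int p)" by (simp add: algebra_simps)
      then have "(k - int p) mod int d = 0" by (rule ix_shift_zero[OF d])
      then have "k - int p = 0" by (rule mod_zero_small) (use kb d2 in simp)
      then show False using kb by simp
    qed
  qed
  have disj01: "(\<lambda>k. (tau^^k) (w 0)) ` {..<p} \<inter> (\<lambda>k. (tau^^k) (w 1)) ` {..<p} = {}"
  proof (rule ccontr)
    assume "\<not> ?thesis"
    then obtain x where x: "x \<in> (\<lambda>k. (tau^^k) (w 0)) ` {..<p}" "x \<in> (\<lambda>k. (tau^^k) (w 1)) ` {..<p}"
      by blast
    then obtain i i' where "x = (tau^^i) (w 0)" "x = (tau^^i') (w 1)" by blast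
    then have e: "(tau^^i) (w 0) = (tau^^i') (w 1)" by simp
    obtain s :: int where s: "s = 1 \<or> s = -1" "\<forall>u. w 0 ! ix d (u + (int i' - int i)) = s * w 1 ! ix d u"
      using shift_rel2[OF d lw lw e] by blast
    define k where "k = int i' - int i"
    have sa: "1 = s * w 1 ! ix d (int a - k)"
      using s(2)[rule_format, of "int a - k"] wa ix_nat[OF a(1)] unfolding k_def by simp
    have sb: "1 = s * w 1 ! ix d (int b - k)"
      using s(2)[rule_format, of "int b - k"] wb0 ix_nat[OF b(1)] unfolding k_def by simp
    have "w 1 ! ix d (int a - k) \<noteq> 0" using sa by auto
    then have "ix d (int a - k) = a \<or> ix d (int a - k) = b" using wonly ix_lt[OF d] by blast
    then show False
    proof
      assume h: "ix d (int a - k) = a"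
      have "ix d (int b - k) = ix d (int (ix d (int a - k)) + int p)"
        using ix_add[OF d, of "int a - k" "int p"] ix_add[OF d, of "int a + int p" "- k"] bdef
        by (simp add: algebra_simps)
      then have "ix d (int b - k) = b" using h bdef by simp
      then show False using sa sb h wa wb1 by simp
    next
      assume h: "ix d (int a - k) = b"
      have "ix d (int b - k) = ix d (int (ix d (int a - k)) + int p)"
        using ix_add[OF d, of "int a - k" "int p"] ix_add[OF d, of "int a + int p" "- k"] bdef
        by (simp add: algebra_simps)
      then have "ix d (int b - k) = a" using h bpa by simp
      then show False using sa sb h wa wb1 by simp
    qed
  qed
  have pq: "2 * p = d" using d2 by simp
  show ?thesis
  proof (rule assemble[OF d z p(1) pq per orb injz wpc wabs winj])
    fix j j' :: nat assume "j < 2" "j' < 2" "j \<noteq> j'"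
    then have "(j = 0 \<and> j' = 1) \<or> (j = 1 \<and> j' = 0)" by auto
    then show "(\<lambda>k. (tau^^k) (w j)) ` {..<p} \<inter> (\<lambda>k. (tau^^k) (w j')) ` {..<p} = {}"
      using disj01 by auto
  qed
qed

theorem proposition6p1:
  fixes d :: nat and z :: "int list"
  assumes "d > 0" and "z \<in> prim_circ d"
  shows "\<exists>K P. K \<subseteq> prim_circ d \<and> card K = d \<and> (\<forall>x\<in>K. norm1 x = norm1 z)
     \<and> partition_on K P \<and> card P = d div card (orbit z)
     \<and> (\<forall>L\<in>P. card L = card (orbit z)
          \<and> (\<forall>i<d. kappa d (orbit z) = (\<Sum>x\<in>L. \<bar>x ! i\<bar>))
          \<and> (\<exists>w\<in>prim_circ d. L \<subseteq> orbit w))"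
proof -
  note d = assms(1) and z = assms(2)
  obtain p where p: "0 < p" "p dvd d" "(tau^^p) z = z" and orb: "orbit z = (\<lambda>k. (tau^^k) z) ` {..<p}"
    and injz: "inj_on (\<lambda>k. (tau^^k) z) {..<p}"
    using orbit_struct[OF z d] by blast
  have lz: "length z = d" using z by (simp add: prim_circ_def primitive_pts_def)
  obtain a where a: "a < d" "z ! a > 0" "\<forall>j<a. z ! j = 0"
    using z by (auto simp: prim_circ_def)
  show ?thesis
  proof (cases "p = d")
    case True
    show ?thesis
    proof (rule assemble[OF d z p(1) _ p(3) orb injz, of 1 "\<lambda>_. z"])
      show "1 * p = d" using True by simp
    qed (use z injz in auto)
  next
    case False
    then have pd: "p < d" using p(2) d by (simp add: dvd_imp_le le_neq_implies_less)
    define b where "b = ix d (int a + int p)"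
    have bl: "b < d" unfolding b_def by (rule ix_lt[OF d])
    have absb: "\<bar>z ! b\<bar> = \<bar>z ! a\<bar>"
    proof -
      have "\<bar>z ! ix d (int a + int p - int p)\<bar> = \<bar>z ! ix d (int a + int p)\<bar>"
        by (rule abs_period[OF lz d p(3)])
      then show ?thesis using b_def ix_nat[OF a(1)] by simp
    qed
    have bnz: "z ! b \<noteq> 0" using absb a by auto
    have bna: "b \<noteq> a"
    proof
      assume "b = a"
      then have "ix d (int a + int p) = ix d (int a)" using b_def ix_nat[OF a(1)] by simp
      then have "int p mod int d = 0" by (rule ix_shift_zero[OF d])
      then have "int p = 0" by (rule mod_zero_small) (use pd in simp)
      then show False using p by simp
    qed
    show ?thesis
    proof (cases "\<exists>c<d. c \<noteq> a \<and> c \<noteq> b \<and> z ! c \<noteq> 0")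
      case True
      then obtain c where c: "c < d" "z ! c \<noteq> 0" "c \<noteq> a" "c \<noteq> b" by blast
      show ?thesis by (rule case_big[OF d z p(1) p(2) pd p(3) orb injz a bl bnz bna c])
    next
      case False
      then have only: "\<forall>t<d. z ! t \<noteq> 0 \<longrightarrow> t = a \<or> t = b" by blast
      show ?thesis by (rule case_two[OF d z p(1) p(2) pd p(3) orb injz a b_def bl bnz bna only])
    qed
  qed
qed

end
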